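(* Let $\boldsymbol X \in \mathbb{R}^{n\times d}$, $\boldsymbol y \in \mathbb{R}^n$, $\boldsymbol M = \boldsymbol X^\top \boldsymbol X$, $\boldsymbol r = \boldsymbol X^\top \boldsymbol y$. Assume (A1) $\boldsymbol r > \mathbf 0$ and (A2) $M_{ij}\le 0$ for all $i\neq j$. Let $\boldsymbol C>\mathbf 0$, $\boldsymbol k>\mathbf 0$ in $\mathbb{R}^d$, and for $\varepsilon>0$ let $\boldsymbol\theta^{(\varepsilon)}(t)$ solve $$\frac{\mathrm d \theta_i}{\mathrm d t} = \theta_i\Big(r_i - \sum_{j=1}^d M_{ij}\theta_j\Big),\quad i=1,\dots,d,$$ with $\boldsymbol\theta^{(\varepsilon)}(0) = (C_1\varepsilon^{k_1},\dots,C_d\varepsilon^{k_d})$. Let $\boldsymbol\theta_\star = \boldsymbol M^{-1}\boldsymbol r$ (the minimizer of $f(\boldsymbol\theta)=\frac12\Vert\boldsymbol y - \boldsymbol X\boldsymbol\theta\Vert^2$), and for $\eta>0$ let $$\tau^{(\varepsilon)}_\eta = \inf\{ t\ge 0 : \Vert \boldsymbol\theta^{(\varepsilon)}(t) - \boldsymbol\theta_\star\Vert \le \eta\}.$$ Then for all $\eta>0$ small enough, $$\frac{\tau_\eta^{(\varepsilon)}}{\log\frac1\varepsilon}\xrightarrow[\varepsilon\to0]{} \max_{i\in\{1,\dots,d\}} \frac{(\boldsymbol M^{-1}\boldsymbol k)_i}{(\boldsymbol M^{-1}\boldsymbol r)_i}.$$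
   Context: Vector inequalities are coordinatewise; $\Vert\cdot\Vert$ is the Euclidean norm. Under (A1)–(A2), $\boldsymbol M$ is invertible. *)

theory Defs
  imports "HOL-Analysis.Analysis"
begin

definition lv_field :: "real^'d^'d \<Rightarrow> real^'d \<Rightarrow> real^'d \<Rightarrow> real^'d" where
  "lv_field M r th = (\<chi> i. th$i * (r$i - (\<Sum>j\<in>UNIV. M$i$j * th$j)))"

definition hit_time :: "(real \<Rightarrow> real^'d) \<Rightarrow> real^'d \<Rightarrow> real \<Rightarrow> real" where
  "hit_time th target eta = Inf {t. t \<ge> 0 \<and> norm (th t - target) \<le> eta}"

end

theory Submission
  imports Defs
begin
lemma inner_transpose_mv:
  fixes X :: "real^'d^'n"
  shows "inner (transpose X *v y) z = inner y (X *v z)"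
proof -
  have "inner (transpose X *v y) z = (\<Sum>i\<in>UNIV. \<Sum>j\<in>UNIV. y$j * X$j$i * z$i)"
    by (simp add: inner_vec_def matrix_vector_mult_def transpose_def sum_distrib_left sum_distrib_right mult_ac)
  also have "\<dots> = (\<Sum>j\<in>UNIV. \<Sum>i\<in>UNIV. y$j * X$j$i * z$i)" by (rule sum.swap)
  also have "\<dots> = inner y (X *v z)"
    by (simp add: inner_vec_def matrix_vector_mult_def sum_distrib_left mult_ac)
  finally show ?thesis .
qed

lemma inner_M:
  fixes X :: "real^'d^'n"
  shows "inner a ((transpose X ** X) *v b) = inner (X *v a) (X *v b)"
  by (metis inner_commute inner_transpose_mv matrix_vector_mul_assoc)

lemma quad_M:
  fixes X :: "real^'d^'n"
  shows "inner a ((transpose X ** X) *v a) = (norm (X *v a))^2"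
  by (simp add: inner_M power2_norm_eq_inner)

lemma quad_zero:
  fixes X :: "real^'d^'n"
  assumes "inner a ((transpose X ** X) *v a) \<le> 0"
  shows "(transpose X ** X) *v a = 0" "X *v a = 0"
proof -
  from assms have "X *v a = 0" by (simp add: quad_M)
  then show "X *v a = 0" "(transpose X ** X) *v a = 0"
    by (auto simp flip: matrix_vector_mul_assoc)
qed

lemma abs_quad:
  fixes M :: "real^'d^'d"
  assumes Z: "\<forall>i j. i \<noteq> j \<longrightarrow> M$i$j \<le> 0"
  shows "inner (\<chi> i. \<bar>x$i\<bar>) (M *v (\<chi> i. \<bar>x$i\<bar>)) \<le> inner x (M *v x)"
proof -
  have "inner (\<chi> i. \<bar>x$i\<bar>) (M *v (\<chi> i. \<bar>x$i\<bar>)) = (\<Sum>i\<in>UNIV. \<Sum>j\<in>UNIV. M$i$j * \<bar>x$i\<bar> * \<bar>x$j\<bar>)"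
    by (simp add: inner_vec_def matrix_vector_mult_def sum_distrib_left mult.commute mult.left_commute)
  also have "\<dots> \<le> (\<Sum>i\<in>UNIV. \<Sum>j\<in>UNIV. M$i$j * x$i * x$j)"
  proof (intro sum_mono)
    fix i j
    show "M$i$j * \<bar>x$i\<bar> * \<bar>x$j\<bar> \<le> M$i$j * x$i * x$j"
    proof (cases "i = j")
      case True then show ?thesis by (simp add: abs_mult_self_eq)
    next
      case False
      then have "M$i$j \<le> 0" using Z by auto
      moreover have "x$i * x$j \<le> \<bar>x$i\<bar> * \<bar>x$j\<bar>" by (metis abs_ge_self abs_mult)
      ultimately show ?thesis by (metis mult.assoc mult_left_mono_neg)
    qed
  qed
  also have "\<dots> = inner x (M *v x)"
    by (simp add: inner_vec_def matrix_vector_mult_def sum_distrib_left mult.commute mult.left_commute)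
  finally show ?thesis .
qed

lemma negpart_quad:
  fixes M :: "real^'d^'d"
  assumes Z: "\<forall>i j. i \<noteq> j \<longrightarrow> M$i$j \<le> 0"
  shows "inner (\<chi> i. max (- x$i) 0) (M *v (\<chi> i. max (x$i) 0)) \<le> 0"
proof -
  have "inner (\<chi> i. max (- x$i) 0) (M *v (\<chi> i. max (x$i) 0)) = (\<Sum>i\<in>UNIV. \<Sum>j\<in>UNIV. max (- x$i) 0 * (M$i$j * max (x$j) 0))"
    by (simp add: inner_vec_def matrix_vector_mult_def sum_distrib_left)
  also have "\<dots> \<le> 0"
  proof (intro sum_nonpos)
    fix i j
    show "max (- x$i) 0 * (M$i$j * max (x$j) 0) \<le> 0"
    proof (cases "i = j")
      case True then show ?thesis by (simp add: max_def)
    next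
      case False
      then have "M$i$j \<le> 0" using Z by auto
      then show ?thesis by (simp add: mult_nonneg_nonpos2 mult_nonneg_nonpos mult_nonpos_nonneg)
    qed
  qed
  finally show ?thesis .
qed

lemma M_inj:
  fixes X :: "real^'d^'n" and y :: "real^'n"
  assumes A1: "\<forall>i. (transpose X *v y)$i > 0"
      and A2: "\<forall>i j. i \<noteq> j \<longrightarrow> (transpose X ** X)$i$j \<le> 0"
      and z: "(transpose X ** X) *v x = 0"
  shows "x = 0"
proof -
  let ?M = "transpose X ** X"
  let ?a = "(\<chi> i. \<bar>x$i\<bar>) :: real^'d"
  have "inner ?a (?M *v ?a) \<le> inner x (?M *v x)" by (rule abs_quad[OF A2])
  also have "\<dots> = 0" using z by simp
  finally have "X *v ?a = 0" by (rule quad_zero)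
  then have "inner (transpose X *v y) ?a = 0" by (simp only: inner_transpose_mv inner_zero_right)
  then have "(\<Sum>i\<in>UNIV. (transpose X *v y)$i * \<bar>x$i\<bar>) = 0" by (simp add: inner_vec_def)
  moreover have "\<And>i. i \<in> UNIV \<Longrightarrow> (transpose X *v y)$i * \<bar>x$i\<bar> \<ge> 0" using A1 by (simp add: less_imp_le)
  ultimately have h: "\<forall>i\<in>UNIV. (transpose X *v y)$i * \<bar>x$i\<bar> = 0"
    using sum_nonneg_eq_0_iff[of UNIV "\<lambda>i. (transpose X *v y)$i * \<bar>x$i\<bar>"] by simp
  have "x$i = 0" for i
  proof -
    have "(transpose X *v y)$i * \<bar>x$i\<bar> = 0" using h by simp
    moreover have "(transpose X *v y)$i \<noteq> 0" using A1 by (metis less_irrefl)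
    ultimately show ?thesis by simp
  qed
  then show ?thesis by (simp add: vec_eq_iff)
qed

lemma M_invertible:
  fixes X :: "real^'d^'n" and y :: "real^'n"
  assumes A1: "\<forall>i. (transpose X *v y)$i > 0"
      and A2: "\<forall>i j. i \<noteq> j \<longrightarrow> (transpose X ** X)$i$j \<le> 0"
  shows "invertible (transpose X ** X)"
  using M_inj[OF A1 A2] by (simp add: invertible_left_inverse matrix_left_invertible_ker)

lemma matrix_inv_props:
  fixes M :: "real^'d^'d"
  assumes "invertible M"
  shows "M ** matrix_inv M = mat 1" "matrix_inv M ** M = mat 1"
    "\<And>x. M *v (matrix_inv M *v x) = x" "\<And>x. matrix_inv M *v (M *v x) = x"
proof -
  have "\<exists>A'. M ** A' = mat 1 \<and> A' ** M = mat 1" using assms invertible_def by blast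
  then have *: "M ** matrix_inv M = mat 1 \<and> matrix_inv M ** M = mat 1"
    unfolding matrix_inv_def by (rule someI_ex)
  then show "M ** matrix_inv M = mat 1" "matrix_inv M ** M = mat 1" by auto
  show "\<And>x. M *v (matrix_inv M *v x) = x" "\<And>x. matrix_inv M *v (M *v x) = x"
    using * by (simp_all add: matrix_vector_mul_assoc)
qed

lemma M_monotone:
  fixes X :: "real^'d^'n" and y :: "real^'n"
  assumes A1: "\<forall>i. (transpose X *v y)$i > 0"
      and A2: "\<forall>i j. i \<noteq> j \<longrightarrow> (transpose X ** X)$i$j \<le> 0"
      and nn: "\<forall>i. ((transpose X ** X) *v x)$i \<ge> 0"
  shows "\<forall>i. x$i \<ge> 0"
proof -
  let ?M = "transpose X ** X"
  let ?p = "(\<chi> i. max (x$i) 0) :: real^'d"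
  let ?q = "(\<chi> i. max (- x$i) 0) :: real^'d"
  have x: "x = ?p - ?q" by (simp add: vec_eq_iff max_def)
  have "inner ?q (?M *v x) \<ge> 0"
    using nn by (simp add: inner_vec_def sum_nonneg)
  moreover have "inner ?q (?M *v x) = inner ?q (?M *v ?p) - inner ?q (?M *v ?q)"
    by (subst x) (simp add: matrix_vector_mult_diff_distrib inner_diff_right)
  moreover have "inner ?q (?M *v ?p) \<le> 0" by (rule negpart_quad[OF A2])
  ultimately have "inner ?q (?M *v ?q) \<le> 0" by linarith
  then have "?M *v ?q = 0" by (rule quad_zero)
  then have "?q = 0" by (rule M_inj[OF A1 A2])
  show ?thesis
  proof
    fix i
    have "max (- x$i) 0 = 0" using \<open>?q = 0\<close> by (metis vec_lambda_beta zero_index)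
    then show "x$i \<ge> 0" by (simp add: max_def split: if_splits)
  qed
qed

lemma M_strict:
  fixes X :: "real^'d^'n" and y :: "real^'n"
  assumes A1: "\<forall>i. (transpose X *v y)$i > 0"
      and A2: "\<forall>i j. i \<noteq> j \<longrightarrow> (transpose X ** X)$i$j \<le> 0"
      and pos: "\<forall>i. ((transpose X ** X) *v x)$i > 0"
  shows "\<forall>i. x$i > 0"
proof
  fix i
  let ?M = "transpose X ** X"
  have nn: "\<forall>i. x$i \<ge> 0" using M_monotone[OF A1 A2, of x] pos less_imp_le by blast
  show "x$i > 0"
  proof (rule ccontr)
    assume "\<not> x$i > 0"
    then have xi: "x$i = 0" using nn by (meson antisym not_le)
    have "(?M *v x)$i = (\<Sum>j\<in>UNIV. ?M$i$j * x$j)" by (simp add: matrix_vector_mult_def)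
    also have "\<dots> \<le> 0"
    proof (rule sum_nonpos)
      fix j show "?M$i$j * x$j \<le> 0"
      proof (cases "j = i")
        case True then show ?thesis using xi by simp
      next
        case False then show ?thesis using A2 nn by (simp add: mult_nonpos_nonneg)
      qed
    qed
    finally show False using pos by (meson not_le)
  qed
qed

lemma M_pd:
  fixes X :: "real^'d^'n" and y :: "real^'n"
  assumes inv: "invertible (transpose X ** X)"
  shows "\<exists>lam>0. \<forall>x. inner x ((transpose X ** X) *v x) \<ge> lam * (norm x)^2"
proof -
  let ?M = "transpose X ** X"
  let ?N = "matrix_inv ?M"
  obtain K1 where K1: "K1 > 0" "\<And>x. norm (?N *v x) \<le> norm x * K1"
    using bounded_linear.pos_bounded[OF matrix_vector_mul_bounded_linear[of ?N]] by blast
  obtain K2 where K2: "K2 > 0" "\<And>x. norm (transpose X *v x) \<le> norm x * K2"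
    using bounded_linear.pos_bounded[OF matrix_vector_mul_bounded_linear[of "transpose X"]] by blast
  have *: "\<forall>x. inner x (?M *v x) \<ge> (1 / (K1*K2)^2) * (norm x)^2"
  proof
    fix x :: "real^'d"
    have "norm x = norm (?N *v (?M *v x))" using matrix_inv_props(4)[OF inv] by simp
    also have "\<dots> \<le> norm (?M *v x) * K1" by (rule K1)
    also have "norm (?M *v x) = norm (transpose X *v (X *v x))" by (simp add: matrix_vector_mul_assoc)
    also have "\<dots> \<le> norm (X *v x) * K2" by (rule K2)
    finally have "norm x \<le> norm (X *v x) * (K1 * K2)" using K1 by (simp add: mult_ac)
    then have "norm x / (K1*K2) \<le> norm (X *v x)" using K1 K2 by (simp add: divide_simps)
    then have "(norm x / (K1*K2))^2 \<le> (norm (X *v x))^2"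
      by (rule power_mono) (use K1 K2 in simp)
    then show "inner x (?M *v x) \<ge> (1 / (K1*K2)^2) * (norm x)^2"
      by (simp add: quad_M power_divide)
  qed
  have **: "1 / (K1*K2)^2 > 0" using K1 K2 by simp
  show ?thesis by (rule exI[of _ "1 / (K1*K2)^2"]) (use * ** in fast)
qed

lemma first_cross:
  fixes h :: "'i::finite \<Rightarrow> real \<Rightarrow> real" and T :: real
  assumes cont: "\<And>i. continuous_on {0..T} (h i)"
    and h0: "\<And>i. h i 0 > 0"
    and der: "\<And>i t. 0 < t \<Longrightarrow> t \<le> T \<Longrightarrow> (\<forall>s\<in>{0..<t}. \<forall>j. h j s > 0) \<Longrightarrow>
               (\<forall>j. h j t \<ge> 0) \<Longrightarrow> h i t = 0 \<Longrightarrow> \<exists>D>0. (h i has_real_derivative D) (at t)"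
  shows "\<forall>t\<in>{0..T}. \<forall>i. h i t > 0"
proof (rule ccontr)
  assume neg0: "\<not> (\<forall>t\<in>{0..T}. \<forall>i. h i t > 0)"
  define S where "S = (\<Union>i. {0..T} \<inter> h i -` {..0})"
  have Sne: "S \<noteq> {}" using neg0 by (auto simp: S_def not_less)
  have "closed ({0..T} \<inter> h i -` {..0})" for i
    by (rule continuous_closed_preimage[OF cont]) auto
  then have clS: "closed S" unfolding S_def by (intro closed_Union) auto
  have bdd: "bdd_below S" unfolding S_def by (rule bdd_belowI[of _ 0]) auto
  define t0 where "t0 = Inf S"
  have t0S: "t0 \<in> S" unfolding t0_def by (rule closed_contains_Inf[OF Sne bdd clS])
  then obtain i where i: "t0 \<in> {0..T}" "h i t0 \<le> 0" unfolding S_def by auto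
  have below: "\<forall>s\<in>{0..<t0}. \<forall>j. h j s > 0"
  proof (intro ballI allI)
    fix s j assume s: "s \<in> {0..<t0}"
    show "h j s > 0"
    proof (rule ccontr)
      assume "\<not> h j s > 0"
      then have "s \<in> S" using s i(1) by (auto simp: S_def not_less)
      then have "t0 \<le> s" unfolding t0_def by (rule cInf_lower[OF _ bdd])
      then show False using s by simp
    qed
  qed
  have t0pos: "t0 > 0"
  proof -
    have "t0 \<noteq> 0" using i h0[of i] by auto
    then show ?thesis using i(1) by simp
  qed
  have nonneg: "\<forall>j. h j t0 \<ge> 0"
  proof
    fix j
    show "h j t0 \<ge> 0"
    proof (rule ccontr)
      assume neg: "\<not> h j t0 \<ge> 0"
      obtain d where d: "d > 0" "\<forall>x'\<in>{0..T}. dist x' t0 < d \<longrightarrow> dist (h j x') (h j t0) < - h j t0"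
        using cont[of j] i(1) neg unfolding continuous_on_iff by (metis neg_0_less_iff_less not_le)
      define s where "s = max 0 (t0 - d/2)"
      have s: "s \<in> {0..<t0}" "s \<in> {0..T}" "dist s t0 < d"
        using t0pos d i(1) by (auto simp: s_def dist_real_def)
      then have "dist (h j s) (h j t0) < - h j t0" using d by blast
      then have "h j s < 0" by (simp add: dist_real_def)
      moreover have "h j s > 0" using below s(1) by blast
      ultimately show False by linarith
    qed
  qed
  have hi0: "h i t0 = 0" using nonneg i by (meson antisym)
  obtain D where D: "D > 0" "(h i has_real_derivative D) (at t0)"
    using der[OF t0pos _ below nonneg hi0] i(1) by auto
  obtain d where d: "d > 0" "\<forall>e>0. e < d \<longrightarrow> h i (t0 - e) < h i t0"
    using DERIV_pos_inc_left[OF D(2) D(1)] by blast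
  define e where "e = min d t0 / 2"
  have e: "e > 0" "e < d" "t0 - e \<in> {0..<t0}" using d t0pos by (auto simp: e_def)
  then have "h i (t0 - e) < 0" using d hi0 by auto
  moreover have "h i (t0 - e) > 0" using below e(3) by blast
  ultimately show False by linarith
qed

locale traj =
  fixes X :: "real^'d^'n" and y :: "real^'n" and th :: "real \<Rightarrow> real^'d"
  assumes A1: "\<forall>i. (transpose X *v y)$i > 0"
    and A2: "\<forall>i j. i \<noteq> j \<longrightarrow> (transpose X ** X)$i$j \<le> 0"
    and ode: "\<And>t. t \<ge> 0 \<Longrightarrow> (th has_vector_derivative
                 lv_field (transpose X ** X) (transpose X *v y) (th t)) (at t within {0..})"
    and th0: "\<And>i. th 0 $ i > 0"
begin

abbreviation "MM \<equiv> transpose X ** X"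
abbreviation "rr \<equiv> transpose X *v y"

lemma comp_deriv:
  assumes "t \<ge> 0"
  shows "((\<lambda>s. th s $ i) has_real_derivative (th t $ i * (rr$i - (MM *v th t)$i))) (at t within {0..})"
proof -
  have 1: "((\<lambda>s. th s $ i) has_vector_derivative (lv_field MM rr (th t)) $ i) (at t within {0..})"
    using bounded_linear.has_vector_derivative[OF bounded_linear_vec_nth[of i] ode[OF assms]] .
  have 2: "(lv_field MM rr (th t)) $ i = th t $ i * (rr$i - (MM *v th t)$i)"
    by (simp only: lv_field_def matrix_vector_mult_def vec_lambda_beta)
  show ?thesis
    unfolding has_real_derivative_iff_has_vector_derivative using 1 unfolding 2 .
qed

lemma within_to_at:
  fixes f :: "real \<Rightarrow> real"
  assumes "(f has_real_derivative D) (at t within {0..})" "t > 0"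
  shows "(f has_real_derivative D) (at t)"
proof -
  have "(f has_real_derivative D) (at t within {0<..})" by (rule DERIV_subset[OF assms(1)]) auto
  moreover have "at t within {0<..} = at t"
    by (rule at_within_open) (use assms(2) in auto)
  ultimately show ?thesis by simp
qed

lemma comp_deriv_at:
  assumes "t > 0"
  shows "((\<lambda>s. th s $ i) has_real_derivative (th t $ i * (rr$i - (MM *v th t)$i))) (at t)"
  using assms by (intro within_to_at[OF comp_deriv]) auto

lemma cont: "continuous_on {0..} th"
  unfolding continuous_on_eq_continuous_within
proof
  fix x :: real assume "x \<in> {0..}"
  then have "x \<ge> 0" by simp
  then show "continuous (at x within {0..}) th" by (rule has_vector_derivative_continuous[OF ode])
qed

lemma cont_comp: "S \<subseteq> {0..} \<Longrightarrow> continuous_on S (\<lambda>s. th s $ i)"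
  by (rule continuous_on_component, rule continuous_on_subset[OF cont])

lemma Mth_expand: "(MM *v th s)$i = (\<Sum>j\<in>UNIV. MM$i$j * th s $ j)"
  by (simp add: matrix_vector_mult_def)

lemma cont_Mth: "S \<subseteq> {0..} \<Longrightarrow> continuous_on S (\<lambda>s. (MM *v th s)$i)"
  unfolding Mth_expand
proof -
  assume S: "S \<subseteq> {0..}"
  show "continuous_on S (\<lambda>s. \<Sum>j\<in>UNIV. MM$i$j * th s $ j)"
    by (rule continuous_on_sum, rule continuous_on_mult[OF continuous_on_const cont_comp[OF S]])
qed

lemma pos: "t \<ge> 0 \<Longrightarrow> th t $ i > 0"
proof (cases "t = 0")
  case True then show ?thesis using th0 by simp
next
  case False
  assume t0: "t \<ge> 0"
  then have tpos: "t > 0" using False by simp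
  define a where "a = (\<lambda>s. rr$i - (MM *v th s)$i)"
  have "continuous_on {0..t} (\<lambda>s. (MM *v th s)$i)" by (rule cont_Mth) auto
  then have ca: "continuous_on {0..t} a" unfolding a_def by (rule continuous_on_diff[OF continuous_on_const])
  define g where "g = (\<lambda>s. th s $ i * exp (- integral {0..s} a))"
  have dg: "(g has_real_derivative 0) (at s within {0..t})" if s: "s \<in> {0..t}" for s
  proof -
    have s0: "s \<ge> 0" using s by simp
    have sub: "{0..t} \<subseteq> {0..}" by auto
    have d1: "((\<lambda>s. th s $ i) has_real_derivative (th s $ i * a s)) (at s within {0..t})"
      unfolding a_def by (rule DERIV_subset[OF comp_deriv[OF s0] sub])
    have d2: "((\<lambda>x. integral {0..x} a) has_real_derivative a s) (at s within {0..t})"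
      by (rule integral_has_real_derivative[OF ca s])
    have d3: "((\<lambda>x. exp (- integral {0..x} a)) has_real_derivative exp (- integral {0..s} a) * (- a s)) (at s within {0..t})"
      by (rule DERIV_chain2[OF DERIV_exp DERIV_minus[OF d2]])
    have "(g has_real_derivative (th s $ i * (exp (- integral {0..s} a) * (- a s)) +
             (th s $ i * a s) * exp (- integral {0..s} a))) (at s within {0..t})"
      unfolding g_def by (rule DERIV_mult'[OF d1 d3])
    then show ?thesis by (simp add: algebra_simps)
  qed
  have "g t = g 0"
  proof (rule DERIV_isconst_end[OF tpos])
    show "continuous_on {0..t} g" by (rule DERIV_continuous_on[OF dg])
    fix x assume "0 < x" "x < t"
    then show "(g has_real_derivative 0) (at x)"
      using dg[of x] by (simp add: at_within_Icc_at)
  qed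
  then have "th t $ i * exp (- integral {0..t} a) = th 0 $ i" by (simp add: g_def)
  then have "th t $ i * exp (- integral {0..t} a) > 0" using th0 by simp
  then show ?thesis by (simp add: zero_less_mult_iff)
qed

end

definition lamX :: "real^'d^'n \<Rightarrow> real" where
  "lamX X = (SOME l. l > 0 \<and> (\<forall>x. inner x ((transpose X ** X) *v x) \<ge> l * (norm x)^2))"

context traj
begin

abbreviation "NN \<equiv> matrix_inv MM"
abbreviation "ts \<equiv> NN *v rr"

definition ell :: "real \<Rightarrow> real^'d" where "ell t = (\<chi> i. ln (th t $ i))"
definition uu :: "real \<Rightarrow> real^'d" where "uu t = NN *v ell t"

lemma inv: "invertible MM" by (rule M_invertible[OF A1 A2])

lemma M_ts: "MM *v ts = rr" by (rule matrix_inv_props(3)[OF inv])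

lemma M_uu: "MM *v uu t = ell t" unfolding uu_def by (rule matrix_inv_props(3)[OF inv])

lemma ts_pos: "ts $ i > 0"
  using M_strict[OF A1 A2, of ts] unfolding M_ts using A1 by blast

lemma lam: "lamX X > 0" "inner x (MM *v x) \<ge> lamX X * (norm x)^2"
proof -
  have "\<exists>l. l > 0 \<and> (\<forall>x. inner x (MM *v x) \<ge> l * (norm x)^2)"
    using M_pd[OF inv] by blast
  then have "lamX X > 0 \<and> (\<forall>x. inner x (MM *v x) \<ge> lamX X * (norm x)^2)"
    unfolding lamX_def by (rule someI_ex)
  then show "lamX X > 0" "inner x (MM *v x) \<ge> lamX X * (norm x)^2" by auto
qed

lemma mv_nth: "(A *v v) $ i = (\<Sum>j\<in>UNIV. A$i$j * v$j)" for A :: "real^'d^'d"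
  unfolding matrix_vector_mult_def by (rule vec_lambda_beta)

lemma ell_nth: "ell t $ i = ln (th t $ i)" unfolding ell_def by (rule vec_lambda_beta)

lemma uu_nth: "uu t $ i = (\<Sum>j\<in>UNIV. NN$i$j * ln (th t $ j))"
  unfolding uu_def mv_nth ell_nth ..

lemma th_exp: "t \<ge> 0 \<Longrightarrow> th t $ i = exp (ell t $ i)"
  unfolding ell_nth using pos by simp

lemma ln_deriv_at:
  assumes "t > 0"
  shows "((\<lambda>s. ln (th s $ i)) has_real_derivative (rr$i - (MM *v th t)$i)) (at t)"
proof -
  have p: "th t $ i > 0" using pos assms by simp
  have d: "((\<lambda>s. ln (th s $ i)) has_real_derivative inverse (th t $ i) * (th t $ i * (rr$i - (MM *v th t)$i))) (at t)"
    by (rule DERIV_chain2[OF DERIV_ln[OF p] comp_deriv_at[OF assms]])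
  have eq: "inverse (th t $ i) * (th t $ i * (rr$i - (MM *v th t)$i)) = rr$i - (MM *v th t)$i"
  proof -
    have "inverse (th t $ i) * (th t $ i * (rr$i - (MM *v th t)$i)) = (inverse (th t $ i) * th t $ i) * (rr$i - (MM *v th t)$i)"
      by (rule mult.assoc[symmetric])
    also have "\<dots> = rr$i - (MM *v th t)$i" using p by simp
    finally show ?thesis .
  qed
  show ?thesis using d unfolding eq .
qed

lemma uu_deriv_at:
  assumes "t > 0"
  shows "((\<lambda>s. uu s $ i) has_real_derivative (ts$i - th t $ i)) (at t)"
proof -
  have "((\<lambda>s. \<Sum>j\<in>UNIV. NN$i$j * ln (th s $ j)) has_real_derivative
          (\<Sum>j\<in>UNIV. NN$i$j * (rr$j - (MM *v th t)$j))) (at t)"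
    by (rule DERIV_sum, rule DERIV_cmult, rule ln_deriv_at[OF assms])
  moreover have "(\<Sum>j\<in>UNIV. NN$i$j * (rr$j - (MM *v th t)$j)) = (NN *v (rr - MM *v th t)) $ i"
  proof -
    have "(NN *v (rr - MM *v th t)) $ i = (\<Sum>j\<in>UNIV. NN$i$j * (rr - MM *v th t)$j)" by (rule mv_nth)
    also have "\<dots> = (\<Sum>j\<in>UNIV. NN$i$j * (rr$j - (MM *v th t)$j))" by (simp only: vector_minus_component)
    finally show ?thesis by (rule sym)
  qed
  moreover have "NN *v (rr - MM *v th t) = ts - th t"
    by (simp add: matrix_vector_mult_diff_distrib matrix_inv_props(4)[OF inv])
  ultimately show ?thesis unfolding uu_nth by simp
qed

lemma cont_ln: "S \<subseteq> {0..} \<Longrightarrow> continuous_on S (\<lambda>s. ln (th s $ j))"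
proof -
  assume S: "S \<subseteq> {0..}"
  show ?thesis
  proof (rule continuous_on_ln[OF cont_comp[OF S]])
    show "\<forall>x\<in>S. th x $ j \<noteq> 0" using S pos by (metis atLeast_iff less_irrefl subsetD)
  qed
qed

lemma cont_uu: "S \<subseteq> {0..} \<Longrightarrow> continuous_on S (\<lambda>s. uu s $ i)"
proof -
  assume S: "S \<subseteq> {0..}"
  show ?thesis unfolding uu_nth
    by (rule continuous_on_sum, rule continuous_on_mult[OF continuous_on_const cont_ln[OF S]])
qed

lemma lower:
  assumes "t \<ge> 0"
  shows "uu t $ i - ts$i * t \<le> uu 0 $ i"
proof -
  have "(\<lambda>s. uu s $ i - ts$i * s) 0 \<ge> (\<lambda>s. uu s $ i - ts$i * s) t"
  proof (rule DERIV_nonpos_imp_decreasing_open[OF assms])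
    fix x :: real assume x: "0 < x" "x < t"
    have "((\<lambda>s. uu s $ i - ts$i * s) has_real_derivative (ts$i - th x $ i) - ts$i * 1) (at x)"
      by (rule DERIV_diff[OF uu_deriv_at[OF x(1)] DERIV_cmult[OF DERIV_ident]])
    moreover have "(ts$i - th x $ i) - ts$i * 1 \<le> 0" using pos[of x i] x by simp
    ultimately show "\<exists>y. ((\<lambda>s. uu s $ i - ts$i * s) has_real_derivative y) (at x) \<and> y \<le> 0" by blast
  next
    show "continuous_on {0..t} (\<lambda>s. uu s $ i - ts$i * s)"
      by (rule continuous_on_diff[OF cont_uu], auto intro: continuous_intros)
  qed
  then show ?thesis by simp
qed

end

context traj
begin

lemma box:
  assumes b: "\<beta> > 1" and b0: "\<forall>i. th 0 $ i < \<beta> * ts$i" and t: "t \<ge> 0"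
  shows "th t $ i < \<beta> * ts$i"
proof -
  have "\<forall>s\<in>{0..t}. \<forall>i. (\<lambda>i s. \<beta> * ts$i - th s $ i) i s > 0"
  proof (rule first_cross)
    fix i
    show "continuous_on {0..t} (\<lambda>s. \<beta> * ts$i - th s $ i)"
      by (rule continuous_on_diff[OF continuous_on_const cont_comp]) auto
    show "(\<lambda>s. \<beta> * ts$i - th s $ i) 0 > 0" using b0 by simp
  next
    fix i s
    assume s: "0 < s" "s \<le> t" and nonneg: "\<forall>j. (\<lambda>s. \<beta> * ts$j - th s $ j) s \<ge> 0"
      and zero: "(\<lambda>s. \<beta> * ts$i - th s $ i) s = 0"
    have thi: "th s $ i = \<beta> * ts$i" using zero by simp
    have le: "th s $ j \<le> \<beta> * ts$j" for j using nonneg by (metis diff_ge_0_iff_ge)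
    have "(MM *v th s)$i = (\<Sum>j\<in>UNIV. MM$i$j * th s $ j)" by (rule mv_nth)
    also have "\<dots> \<ge> (\<Sum>j\<in>UNIV. MM$i$j * (\<beta> * ts$j))"
    proof (rule sum_mono)
      fix j
      show "MM$i$j * (\<beta> * ts$j) \<le> MM$i$j * th s $ j"
      proof (cases "j = i")
        case True then show ?thesis using thi by simp
      next
        case False
        then have "MM$i$j \<le> 0" using A2 by auto
        with le[of j] show ?thesis by (rule mult_left_mono_neg)
      qed
    qed
    finally have ge1: "(MM *v th s)$i \<ge> (\<Sum>j\<in>UNIV. MM$i$j * (\<beta> * ts$j))" .
    have "(\<Sum>j\<in>UNIV. MM$i$j * (\<beta> * ts$j)) = \<beta> * (\<Sum>j\<in>UNIV. MM$i$j * ts$j)"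
      by (simp add: sum_distrib_left mult_ac)
    also have "(\<Sum>j\<in>UNIV. MM$i$j * ts$j) = rr$i" using M_ts mv_nth by metis
    finally have ge2: "(MM *v th s)$i \<ge> \<beta> * rr$i" using ge1 by simp
    have "rr$i > 0" using A1 by blast
    then have "\<beta> * rr$i > rr$i" using b by simp
    then have gt: "(MM *v th s)$i - rr$i > 0" using ge2 by simp
    have p: "th s $ i > 0" using pos s by simp
    have "((\<lambda>s. \<beta> * ts$i - th s $ i) has_real_derivative 0 - th s $ i * (rr$i - (MM *v th s)$i)) (at s)"
      by (rule DERIV_diff[OF DERIV_const comp_deriv_at[OF s(1)]])
    moreover have "0 - th s $ i * (rr$i - (MM *v th s)$i) > 0"
      using mult_pos_pos[OF p gt] by (simp add: algebra_simps)
    ultimately show "\<exists>D>0. ((\<lambda>s. \<beta> * ts$i - th s $ i) has_real_derivative D) (at s)" by blast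
  qed
  then show ?thesis using t by simp
qed

lemma subsol:
  assumes a0: "\<forall>i. uu 0 $ i > a$i"
    and cond: "\<forall>s\<in>{0..T1}. \<forall>i. ts$i - exp ((MM *v (a + s *\<^sub>R w))$i) > w$i"
  shows "\<forall>s\<in>{0..T1}. \<forall>i. uu s $ i > a$i + s * w$i"
proof -
  have "\<forall>s\<in>{0..T1}. \<forall>i. (\<lambda>i s. uu s $ i - (a$i + s * w$i)) i s > 0"
  proof (rule first_cross)
    fix i
    have c1: "continuous_on {0..T1} (\<lambda>s. uu s $ i)" by (rule cont_uu) auto
    have c2: "continuous_on {0..T1} (\<lambda>s. a$i + s * w$i)"
      by (intro continuous_on_add continuous_on_mult continuous_on_const continuous_on_id)
    show "continuous_on {0..T1} (\<lambda>s. uu s $ i - (a$i + s * w$i))"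
      by (rule continuous_on_diff[OF c1 c2])
    show "(\<lambda>s. uu s $ i - (a$i + s * w$i)) 0 > 0" using a0 by simp
  next
    fix i t
    assume t: "0 < t" "t \<le> T1" and nonneg: "\<forall>j. (\<lambda>s. uu s $ j - (a$j + s * w$j)) t \<ge> 0"
      and zero: "(\<lambda>s. uu s $ i - (a$i + s * w$i)) t = 0"
    define v where "v = a + t *\<^sub>R w"
    have vj: "v$j = a$j + t * w$j" for j by (simp add: v_def)
    have ui: "uu t $ i = v$i" using zero vj by simp
    have le: "uu t $ j \<ge> v$j" for j using nonneg vj by (metis diff_ge_0_iff_ge)
    have "ell t $ i = (MM *v uu t)$i" using M_uu by simp
    also have "\<dots> = (\<Sum>j\<in>UNIV. MM$i$j * uu t $ j)" by (rule mv_nth)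
    also have "\<dots> \<le> (\<Sum>j\<in>UNIV. MM$i$j * v$j)"
    proof (rule sum_mono)
      fix j
      show "MM$i$j * uu t $ j \<le> MM$i$j * v$j"
      proof (cases "j = i")
        case True then show ?thesis using ui by simp
      next
        case False
        then have "MM$i$j \<le> 0" using A2 by auto
        with le[of j] show ?thesis by (rule mult_left_mono_neg)
      qed
    qed
    also have "\<dots> = (MM *v v)$i" by (rule mv_nth[symmetric])
    finally have ell_le: "ell t $ i \<le> (MM *v v)$i" .
    have "th t $ i = exp (ell t $ i)" using th_exp t by simp
    also have "\<dots> \<le> exp ((MM *v v)$i)" using ell_le by simp
    finally have thle: "th t $ i \<le> exp ((MM *v v)$i)" .
    have c: "ts$i - exp ((MM *v v)$i) > w$i" using cond t unfolding v_def by auto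
    have dv: "((\<lambda>s. a$i + s * w$i) has_real_derivative 0 + 1 * w$i) (at t)"
      by (rule DERIV_add[OF DERIV_const DERIV_cmult_right[OF DERIV_ident]])
    have "((\<lambda>s. uu s $ i - (a$i + s * w$i)) has_real_derivative (ts$i - th t $ i) - (0 + 1 * w$i)) (at t)"
      by (rule DERIV_diff[OF uu_deriv_at[OF t(1)] dv])
    moreover have "(ts$i - th t $ i) - (0 + 1 * w$i) > 0" using thle c by simp
    ultimately show "\<exists>D>0. ((\<lambda>s. uu s $ i - (a$i + s * w$i)) has_real_derivative D) (at t)" by blast
  qed
  then show ?thesis by simp
qed

definition W :: "real \<Rightarrow> real" where
  "W s = (\<Sum>i\<in>UNIV. th s $ i - ts$i * ln (th s $ i))"

lemma W_deriv_at:
  assumes t: "t > 0"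
  shows "(W has_real_derivative - inner (th t - ts) (MM *v (th t - ts))) (at t)"
proof -
  have d: "(W has_real_derivative (\<Sum>i\<in>UNIV. th t $ i * (rr$i - (MM *v th t)$i) - ts$i * (rr$i - (MM *v th t)$i))) (at t)"
    unfolding W_def
    by (rule DERIV_sum, rule DERIV_diff[OF comp_deriv_at[OF t] DERIV_cmult[OF ln_deriv_at[OF t]]])
  have e1: "MM *v (th t - ts) = MM *v th t - rr"
    by (simp only: matrix_vector_mult_diff_distrib M_ts)
  have "(\<Sum>i\<in>UNIV. th t $ i * (rr$i - (MM *v th t)$i) - ts$i * (rr$i - (MM *v th t)$i))
        = (\<Sum>i\<in>UNIV. - ((th t - ts)$i * (MM *v (th t - ts))$i))"
    unfolding e1 by (rule sum.cong) (simp_all add: algebra_simps)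
  also have "\<dots> = - inner (th t - ts) (MM *v (th t - ts))"
    by (simp add: inner_vec_def sum_negf)
  finally show ?thesis using d by simp
qed

lemma cont_W: "S \<subseteq> {0..} \<Longrightarrow> continuous_on S W"
proof -
  assume S: "S \<subseteq> {0..}"
  show ?thesis unfolding W_def
    by (rule continuous_on_sum, rule continuous_on_diff[OF cont_comp[OF S]
          continuous_on_mult[OF continuous_on_const cont_ln[OF S]]])
qed

lemma W_decrease:
  assumes t1: "0 \<le> t1" "t1 \<le> t2" and eta: "\<eta> \<ge> 0"
    and far: "\<forall>s\<in>{t1..t2}. norm (th s - ts) \<ge> \<eta>"
  shows "W t2 \<le> W t1 - lamX X * \<eta>^2 * (t2 - t1)"
proof -
  have "(\<lambda>s. W s + lamX X * \<eta>^2 * s) t1 \<ge> (\<lambda>s. W s + lamX X * \<eta>^2 * s) t2"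
  proof (rule DERIV_nonpos_imp_decreasing_open[OF t1(2)])
    fix x :: real assume x: "t1 < x" "x < t2"
    then have xpos: "x > 0" using t1 by simp
    have "((\<lambda>s. W s + lamX X * \<eta>^2 * s) has_real_derivative
            - inner (th x - ts) (MM *v (th x - ts)) + lamX X * \<eta>^2 * 1) (at x)"
      by (rule DERIV_add[OF W_deriv_at[OF xpos] DERIV_cmult[OF DERIV_ident]])
    moreover have "- inner (th x - ts) (MM *v (th x - ts)) + lamX X * \<eta>^2 * 1 \<le> 0"
    proof -
      have n: "norm (th x - ts) \<ge> \<eta>" using far x by auto
      then have "\<eta>^2 \<le> (norm (th x - ts))^2" using eta by (simp add: power_mono)
      then have "lamX X * \<eta>^2 \<le> lamX X * (norm (th x - ts))^2"
        using lam(1) by (simp add: mult_left_mono)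
      also have "\<dots> \<le> inner (th x - ts) (MM *v (th x - ts))" by (rule lam(2))
      finally show ?thesis by simp
    qed
    ultimately show "\<exists>y. ((\<lambda>s. W s + lamX X * \<eta>^2 * s) has_real_derivative y) (at x) \<and> y \<le> 0"
      by blast
  next
    have c1: "continuous_on {t1..t2} W" by (rule cont_W) (use t1 in auto)
    have c2: "continuous_on {t1..t2} (\<lambda>s. lamX X * \<eta>^2 * s)"
      by (intro continuous_on_mult continuous_on_const continuous_on_id)
    show "continuous_on {t1..t2} (\<lambda>s. W s + lamX X * \<eta>^2 * s)"
      by (rule continuous_on_add[OF c1 c2])
  qed
  then show ?thesis by (simp add: algebra_simps)
qed

lemma W_lower:
  assumes t: "t \<ge> 0"
  shows "W t \<ge> (\<Sum>i\<in>UNIV. ts$i - ts$i * ln (ts$i))"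
  unfolding W_def
proof (rule sum_mono)
  fix i
  have a: "ts$i > 0" by (rule ts_pos)
  have x: "th t $ i > 0" using pos t by simp
  have "ln (th t $ i / ts$i) \<le> th t $ i / ts$i - 1" using x a by (intro ln_le_minus_one) simp
  then have i1: "ts$i * ln (th t $ i / ts$i) \<le> ts$i * (th t $ i / ts$i - 1)"
    using a by (simp add: mult_left_mono)
  have e1: "ln (th t $ i / ts$i) = ln (th t $ i) - ln (ts$i)" using x a by (simp add: ln_div)
  have e2: "ts$i * (th t $ i / ts$i - 1) = th t $ i - ts$i" using a by (simp add: field_simps)
  have i2: "ts$i * (ln (th t $ i) - ln (ts$i)) \<le> th t $ i - ts$i" using i1 unfolding e1 e2 .
  have e3: "ts$i * (ln (th t $ i) - ln (ts$i)) = ts$i * ln (th t $ i) - ts$i * ln (ts$i)"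
    by (rule right_diff_distrib)
  show "ts$i - ts$i * ln (ts$i) \<le> th t $ i - ts$i * ln (th t $ i)"
    using i2 unfolding e3 by linarith
qed

lemma W_eq:
  shows "W t = (\<Sum>i\<in>UNIV. th t $ i) - inner rr (uu t)"
proof -
  have "inner ts (ell t) = inner ts (MM *v uu t)" using M_uu by simp
  also have "\<dots> = inner (X *v ts) (X *v uu t)" by (rule inner_M)
  also have "\<dots> = inner (uu t) (MM *v ts)" by (metis inner_M inner_commute)
  also have "\<dots> = inner rr (uu t)" using M_ts by (simp add: inner_commute)
  finally have e: "inner ts (ell t) = inner rr (uu t)" .
  have "W t = (\<Sum>i\<in>UNIV. th t $ i) - (\<Sum>i\<in>UNIV. ts$i * ln (th t $ i))"
    unfolding W_def by (rule sum_subtractf)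
  also have "(\<Sum>i\<in>UNIV. ts$i * ln (th t $ i)) = inner ts (ell t)"
    unfolding inner_vec_def ell_nth by simp
  finally show ?thesis using e by simp
qed

end

lemma aux_cancel: "(q::real) > 0 \<Longrightarrow> q * (T1 + (z / q + 1) - T1) = z + q"
  by (simp add: field_simps)

context traj
begin

lemma hit_lower:
  assumes eta: "\<forall>j. eta \<le> ts$j / 2" and t: "t \<ge> 0" and near: "norm (th t - ts) \<le> eta"
  shows "ts$i * t \<ge> (NN *v (\<chi> j. ln (ts$j / 2)))$i - uu 0 $ i"
proof -
  define lv :: "real^'d" where "lv = (\<chi> j. ln (ts$j / 2))"
  define b where "b = NN *v lv"
  have ellge: "ell t $ j \<ge> lv $ j" for j
  proof -
    have "\<bar>(th t - ts)$j\<bar> \<le> norm (th t - ts)" by (rule component_le_norm_cart)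
    then have "\<bar>th t $ j - ts$j\<bar> \<le> eta" using near by simp
    then have h: "th t $ j \<ge> ts$j / 2" using eta[rule_format, of j] by linarith
    have p: "ts$j / 2 > 0" using ts_pos[of j] by simp
    then have "ln (ts$j / 2) \<le> ln (th t $ j)" using h by simp
    then show ?thesis unfolding lv_def ell_nth by simp
  qed
  have "MM *v (uu t - b) = ell t - lv"
    unfolding b_def by (simp only: matrix_vector_mult_diff_distrib M_uu matrix_inv_props(3)[OF inv])
  then have "\<forall>j. (MM *v (uu t - b))$j \<ge> 0" using ellge by simp
  then have "\<forall>j. (uu t - b)$j \<ge> 0" by (rule M_monotone[OF A1 A2])
  then have ub: "uu t $ i \<ge> b $ i" by simp
  have "uu t $ i - ts$i * t \<le> uu 0 $ i" by (rule lower[OF t])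
  then show ?thesis using ub unfolding b_def lv_def by simp
qed

lemma hit_upper:
  assumes b: "\<beta> > 1" and b0: "\<forall>i. th 0 $ i < \<beta> * ts$i"
    and a0: "\<forall>i. uu 0 $ i > a$i"
    and cond: "\<forall>s\<in>{0..T1}. \<forall>i. ts$i - exp ((MM *v (a + s *\<^sub>R w))$i) > w$i"
    and aend: "\<forall>i. a$i + T1 * w$i \<ge> - Aa * ts$i"
    and T1: "T1 \<ge> 0" and eta: "eta > 0"
  shows "\<exists>s\<in>{T1..T1 + (((\<beta> * (\<Sum>i\<in>UNIV. ts$i) + Aa * (\<Sum>i\<in>UNIV. rr$i * ts$i))
                 - (\<Sum>i\<in>UNIV. ts$i - ts$i * ln (ts$i))) / (lamX X * eta^2) + 1)}.
           norm (th s - ts) \<le> eta"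
proof (rule ccontr)
  define K1 where "K1 = \<beta> * (\<Sum>i\<in>UNIV. ts$i) + Aa * (\<Sum>i\<in>UNIV. rr$i * ts$i)"
  define K0 where "K0 = (\<Sum>i\<in>UNIV. ts$i - ts$i * ln (ts$i))"
  define D where "D = (K1 - K0) / (lamX X * eta^2) + 1"
  assume "\<not> (\<exists>s\<in>{T1..T1 + (((\<beta> * (\<Sum>i\<in>UNIV. ts$i) + Aa * (\<Sum>i\<in>UNIV. rr$i * ts$i))
                 - (\<Sum>i\<in>UNIV. ts$i - ts$i * ln (ts$i))) / (lamX X * eta^2) + 1)}.
           norm (th s - ts) \<le> eta)"
  then have far: "\<forall>s\<in>{T1..T1 + D}. norm (th s - ts) \<ge> eta"
    unfolding D_def K1_def K0_def by auto
  have sub: "\<forall>s\<in>{0..T1}. \<forall>i. uu s $ i > a$i + s * w$i" by (rule subsol[OF a0 cond])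
  have uT: "uu T1 $ i > - Aa * ts$i" for i
  proof -
    have "T1 \<in> {0..T1}" using T1 by simp
    then have "uu T1 $ i > a$i + T1 * w$i" using sub by blast
    then show ?thesis using aend[rule_format, of i] by linarith
  qed
  have s1: "(\<Sum>i\<in>UNIV. th T1 $ i) \<le> \<beta> * (\<Sum>i\<in>UNIV. ts$i)"
    unfolding sum_distrib_left by (rule sum_mono, rule less_imp_le, rule box[OF b b0 T1])
  have "inner rr (uu T1) = (\<Sum>i\<in>UNIV. rr$i * uu T1 $ i)" by (simp add: inner_vec_def)
  also have "\<dots> \<ge> (\<Sum>i\<in>UNIV. rr$i * (- Aa * ts$i))"
  proof (rule sum_mono)
    fix i
    have "rr$i > 0" using A1 by blast
    then show "rr$i * (- Aa * ts$i) \<le> rr$i * uu T1 $ i"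
      using uT[of i] by (intro mult_left_mono) auto
  qed
  finally have s2: "inner rr (uu T1) \<ge> - Aa * (\<Sum>i\<in>UNIV. rr$i * ts$i)"
    by (simp add: sum_distrib_left mult_ac)
  have WT1: "W T1 \<le> K1" unfolding W_eq K1_def using s1 s2 by linarith
  have K0W: "K0 \<le> W T1" unfolding K0_def by (rule W_lower[OF T1])
  have lp: "lamX X * eta^2 > 0" using lam(1) eta by simp
  have Dpos: "D \<ge> 1" unfolding D_def using WT1 K0W lp by simp
  have "W (T1 + D) \<le> W T1 - lamX X * eta^2 * (T1 + D - T1)"
    by (rule W_decrease) (use T1 Dpos eta far in auto)
  also have "lamX X * eta^2 * (T1 + D - T1) = (K1 - K0) + lamX X * eta^2"
    unfolding D_def using lp by (rule aux_cancel)
  finally have "W (T1 + D) \<le> W T1 - ((K1 - K0) + lamX X * eta^2)" .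
  then have "W (T1 + D) < K0" using WT1 lp by linarith
  moreover have "K0 \<le> W (T1 + D)" unfolding K0_def by (rule W_lower) (use T1 Dpos in auto)
  ultimately show False by simp
qed

end

context traj
begin

lemma uu0: "uu 0 = NN *v (\<chi> j. ln (th 0 $ j))" unfolding uu_def ell_def ..

lemma hit_lower':
  assumes "\<forall>j. eta \<le> ts$j / 2" "t \<ge> 0" "norm (th t - ts) \<le> eta"
  shows "ts$i * t \<ge> (NN *v (\<chi> j. ln (ts$j / 2)))$i - (NN *v (\<chi> j. ln (th 0 $ j)))$i"
  using hit_lower[OF assms] unfolding uu0 .

lemma hit_upper':
  assumes "\<beta> > 1" "\<forall>i. th 0 $ i < \<beta> * ts$i"
    and "\<forall>i. (NN *v (\<chi> j. ln (th 0 $ j)))$i > a$i"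
    and "\<forall>s\<in>{0..T1}. \<forall>i. ts$i - exp ((MM *v (a + s *\<^sub>R w))$i) > w$i"
    and "\<forall>i. a$i + T1 * w$i \<ge> - Aa * ts$i"
    and "T1 \<ge> 0" and "eta > 0"
  shows "\<exists>s\<in>{T1..T1 + (((\<beta> * (\<Sum>i\<in>UNIV. ts$i) + Aa * (\<Sum>i\<in>UNIV. rr$i * ts$i))
                 - (\<Sum>i\<in>UNIV. ts$i - ts$i * ln (ts$i))) / (lamX X * eta^2) + 1)}.
           norm (th s - ts) \<le> eta"
  using assms(3) unfolding uu0[symmetric] by (rule hit_upper[OF assms(1,2) _ assms(4-7)])

end

lemma aux_R: "(d::real) > 0 \<Longrightarrow> d * (a / d + 1) = a + d"
  by (simp add: field_simps)

lemma aux_div: "(L::real) > 0 \<Longrightarrow> (I - L * T) / L = I / L - T"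
  by (simp add: field_simps)

lemma aux_absdiv: "(L::real) > 0 \<Longrightarrow> \<bar>x\<bar> < d * L \<Longrightarrow> \<bar>x / L\<bar> < d"
  by (simp add: abs_divide pos_divide_less_eq)

theorem corollary1:
  fixes X :: "real^'d^'n" and y :: "real^'n"
    and C k :: "real^'d"
    and theta :: "real \<Rightarrow> real \<Rightarrow> real^'d"
  defines "M \<equiv> transpose X ** X"
      and "r \<equiv> transpose X *v y"
  assumes A1: "\<forall>i. r$i > 0"
      and A2: "\<forall>i j. i \<noteq> j \<longrightarrow> M$i$j \<le> 0"
      and C_pos: "\<forall>i. C$i > 0"
      and k_pos: "\<forall>i. k$i > 0"
      and ode: "\<And>eps t. eps > 0 \<Longrightarrow> t \<ge> 0 \<Longrightarrow>
                  (theta eps has_vector_derivative lv_field M r (theta eps t)) (at t within {0..})"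
      and init: "\<And>eps. eps > 0 \<Longrightarrow> theta eps 0 = (\<chi> i. C$i * eps powr (k$i))"
  shows "\<exists>eta0>0. \<forall>eta. 0 < eta \<and> eta < eta0 \<longrightarrow>
           ((\<lambda>eps. hit_time (theta eps) (matrix_inv M *v r) eta / ln (1 / eps))
              \<longlongrightarrow> Max (range (\<lambda>i. (matrix_inv M *v k)$i / (matrix_inv M *v r)$i))) (at_right 0)"
proof -
  have A1': "\<forall>i. (transpose X *v y)$i > 0" using A1 unfolding r_def .
  have A2': "\<forall>i j. i \<noteq> j \<longrightarrow> (transpose X ** X)$i$j \<le> 0" using A2 unfolding M_def .
  have inv: "invertible M" unfolding M_def by (rule M_invertible[OF A1' A2'])
  define N where "N = matrix_inv M"
  define ts where "ts = N *v r"
  define m where "m = N *v k"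
  define Ts where "Ts = Max (range (\<lambda>i. m$i / ts$i))"
  have Mts: "M *v ts = r" unfolding ts_def N_def by (rule matrix_inv_props(3)[OF inv])
  have Mm: "M *v m = k" unfolding m_def N_def by (rule matrix_inv_props(3)[OF inv])
  have ts_pos: "ts$i > 0" for i
    using M_strict[OF A1' A2', of ts] Mts A1 unfolding M_def[symmetric] r_def[symmetric] by auto
  have m_pos: "m$i > 0" for i
    using M_strict[OF A1' A2', of m] Mm k_pos unfolding M_def[symmetric] r_def[symmetric] by auto
  have Ts_ge: "m$i / ts$i \<le> Ts" for i unfolding Ts_def by (rule Max_ge) auto
  have "Ts \<in> range (\<lambda>i. m$i / ts$i)" unfolding Ts_def by (rule Max_in) auto
  then obtain i0 where i0: "Ts = m$i0 / ts$i0" by auto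
  have Ts_pos: "Ts > 0" using i0 m_pos ts_pos by simp
  define eta0 where "eta0 = Min (range (\<lambda>i. ts$i)) / 2"
  have "Min (range (\<lambda>i. ts$i)) \<in> range (\<lambda>i. ts$i)" by (rule Min_in) auto
  then have eta0_pos: "eta0 > 0" unfolding eta0_def using ts_pos by auto
  have eta0_le: "eta0 \<le> ts$i / 2" for i
  proof -
    have "Min (range (\<lambda>i. ts$i)) \<le> ts$i" by (rule Min_le) auto
    then show ?thesis unfolding eta0_def by simp
  qed
  have tr: "traj X y (theta eps)" if "eps > 0" for eps
  proof (unfold_locales)
    show "\<forall>i. (transpose X *v y)$i > 0" by (rule A1')
    show "\<forall>i j. i \<noteq> j \<longrightarrow> (transpose X ** X)$i$j \<le> 0" by (rule A2')
    fix t :: real assume "t \<ge> 0"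
    then show "(theta eps has_vector_derivative
                 lv_field (transpose X ** X) (transpose X *v y) (theta eps t)) (at t within {0..})"
      using ode[OF that] unfolding M_def r_def by blast
  next
    fix i
    show "theta eps 0 $ i > 0" using init[OF that] C_pos that by simp
  qed
  show ?thesis
    unfolding N_def[symmetric] ts_def[symmetric] m_def[symmetric] Ts_def[symmetric]
  proof (intro exI[of _ eta0] conjI allI impI)
    show "eta0 > 0" by (rule eta0_pos)
    fix eta assume eta: "0 < eta \<and> eta < eta0"
    have etapos: "eta > 0" and eta_le: "\<forall>j. eta \<le> ts$j / 2"
    proof -
      show "eta > 0" using eta by simp
      show "\<forall>j. eta \<le> ts$j / 2"
      proof
        fix j show "eta \<le> ts$j / 2" using eta eta0_le[of j] by linarith
      qed
    qed
    define lC :: "real^'d" where "lC = (\<chi> j. ln (C$j))"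
    define u0 where "u0 = N *v lC"
    have lnth0: "(\<chi> j. ln (theta eps 0 $ j)) = lC - ln (1/eps) *\<^sub>R k" if e: "eps > 0" for eps
    proof -
      have "ln (C$j * eps powr (k$j)) = ln (C$j) - ln (1/eps) * k$j" for j
        using C_pos[rule_format, of j] e by (simp add: ln_mult ln_div)
      then show ?thesis using init[OF e] unfolding lC_def by (simp add: vec_eq_iff)
    qed
    have Nlnth0: "N *v (\<chi> j. ln (theta eps 0 $ j)) = u0 - ln (1/eps) *\<^sub>R m" if e: "eps > 0" for eps
      unfolding lnth0[OF e] u0_def m_def by (simp only: matrix_vector_mult_diff_distrib matrix_vector_mult_scaleR)
    define b where "b = N *v (\<chi> j. ln (ts$j / 2))"
    define c0 where "c0 = (u0$i0 - b$i0) / ts$i0"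
    have low: "ln (1/eps) * Ts - c0 \<le> t"
      if e: "eps > 0" and t: "t \<ge> 0" and near: "norm (theta eps t - ts) \<le> eta" for eps t
    proof -
      note HL = traj.hit_lower'[OF tr[OF e], folded M_def r_def, folded N_def, folded ts_def]
      have "ts$i0 * t \<ge> b$i0 - (N *v (\<chi> j. ln (theta eps 0 $ j)))$i0"
        unfolding b_def by (rule HL[OF eta_le t near])
      then have h: "ts$i0 * t \<ge> b$i0 - u0$i0 + ln (1/eps) * m$i0" unfolding Nlnth0[OF e] by simp
      have "ts$i0 * (ln (1/eps) * Ts - c0) = b$i0 - u0$i0 + ln (1/eps) * m$i0"
        unfolding i0 c0_def using ts_pos[of i0] by (simp add: field_simps)
      then have "ts$i0 * (ln (1/eps) * Ts - c0) \<le> ts$i0 * t" using h by simp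
      then show ?thesis using ts_pos[of i0] by simp
    qed
    show "((\<lambda>eps. hit_time (theta eps) ts eta / ln (1 / eps)) \<longlongrightarrow> Ts) (at_right 0)"
    proof (rule tendstoI)
      fix \<delta> :: real assume dpos: "\<delta> > 0"
      define T where "T = Ts + \<delta>/2"
      have Tpos: "T > 0" and TsT: "Ts < T" using Ts_pos dpos by (auto simp: T_def)
      define g where "g i = ts$i - m$i / T" for i
      have gpos: "g i > 0" for i
      proof -
        have "m$i / ts$i < T" using Ts_ge[of i] TsT by simp
        then have "m$i < T * ts$i" using ts_pos[of i] by (simp add: divide_less_eq)
        then have "m$i / T < ts$i" using Tpos by (simp add: divide_less_eq mult.commute)
        then show ?thesis unfolding g_def by simp
      qed
      define A where "A = (\<Sum>i\<in>UNIV. \<bar>ln (g i)\<bar> / r$i + \<bar>u0$i\<bar> / ts$i) + 1"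
      have sumge: "(\<Sum>i\<in>UNIV. \<bar>ln (g i)\<bar> / r$i + \<bar>u0$i\<bar> / ts$i) \<ge> \<bar>ln (g i)\<bar> / r$i + \<bar>u0$i\<bar> / ts$i" for i
        by (rule member_le_sum) (use A1 ts_pos in \<open>auto intro!: add_nonneg_nonneg divide_nonneg_pos\<close>)
      have rpos: "r$i > 0" for i using A1 by blast
      have A_ge1: "A \<ge> \<bar>ln (g i)\<bar> / r$i + 1" for i
        using sumge[of i] divide_nonneg_pos[OF abs_ge_zero ts_pos[of i], of "u0$i"] unfolding A_def by linarith
      have A_ge2: "A \<ge> \<bar>u0$i\<bar> / ts$i + 1" for i
        using sumge[of i] divide_nonneg_pos[OF abs_ge_zero rpos[of i], of "ln (g i)"] unfolding A_def by linarith
      have A_nonneg: "A \<ge> 0" using A_ge2 by (meson abs_ge_zero add_nonneg_nonneg divide_nonneg_pos order.trans ts_pos zero_le_one)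
      have expA: "exp (- A * r$i) < g i" for i
      proof -
        have "A * r$i \<ge> (\<bar>ln (g i)\<bar> / r$i + 1) * r$i" using A_ge1[of i] rpos[of i] by (simp add: mult_right_mono)
        also have "(\<bar>ln (g i)\<bar> / r$i + 1) * r$i = \<bar>ln (g i)\<bar> + r$i" using rpos[of i] by (simp add: field_simps)
        finally have "- A * r$i < ln (g i)" using rpos[of i] by linarith
        then have "exp (- A * r$i) < exp (ln (g i))" by simp
        then show ?thesis using gpos[of i] by simp
      qed
      have A0: "u0$i + A * ts$i > 0" for i
      proof -
        have "A * ts$i \<ge> (\<bar>u0$i\<bar> / ts$i + 1) * ts$i" using A_ge2[of i] ts_pos[of i] by (simp add: mult_right_mono)
        also have "(\<bar>u0$i\<bar> / ts$i + 1) * ts$i = \<bar>u0$i\<bar> + ts$i" using ts_pos[of i] by (simp add: field_simps)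
        finally show ?thesis using ts_pos[of i] by linarith
      qed
      define \<beta> where "\<beta> = (\<Sum>i\<in>UNIV. C$i / ts$i) + 2"
      have b1: "\<beta> > 1" unfolding \<beta>_def using C_pos ts_pos by (simp add: sum_nonneg less_imp_le) (smt (verit) sum_nonneg divide_nonneg_pos less_imp_le)
      have bC: "C$i < \<beta> * ts$i" for i
      proof -
        have "C$i / ts$i \<le> (\<Sum>i\<in>UNIV. C$i / ts$i)"
          by (rule member_le_sum) (use C_pos ts_pos in \<open>auto intro: divide_nonneg_pos less_imp_le\<close>)
        then have "C$i / ts$i < \<beta>" unfolding \<beta>_def by simp
        then show ?thesis using ts_pos[of i] by (simp add: divide_less_eq)
      qed
      define D where "D = (((\<beta> * (\<Sum>i\<in>UNIV. ts$i) + A * (\<Sum>i\<in>UNIV. r$i * ts$i))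
                 - (\<Sum>i\<in>UNIV. ts$i - ts$i * ln (ts$i))) / (lamX X * eta^2) + 1)"
      have up: "\<exists>s\<in>{T * ln (1/eps)..T * ln (1/eps) + D}. norm (theta eps s - ts) \<le> eta"
        if e: "eps > 0" "eps < 1" for eps
      proof -
        define L where "L = ln (1/eps)"
        have Lpos: "L > 0" unfolding L_def using e by simp
        define a where "a = (- L) *\<^sub>R m - A *\<^sub>R ts"
        define w where "w = (1/T) *\<^sub>R m"
        note HU = traj.hit_upper'[OF tr[OF e(1)], folded M_def r_def, folded N_def, folded ts_def]
        show ?thesis unfolding D_def L_def[symmetric]
        proof (rule HU[of \<beta> a "T * L" w A eta])
          show "\<beta> > 1" by (rule b1)
          show "\<forall>i. theta eps 0 $ i < \<beta> * ts$i"
          proof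
            fix i
            have "eps powr (k$i) \<le> 1" using e k_pos by (intro powr_le1) (auto simp: less_imp_le)
            then have "C$i * eps powr (k$i) \<le> C$i" using C_pos[rule_format, of i] by (simp add: mult_left_le)
            then show "theta eps 0 $ i < \<beta> * ts$i" using init[OF e(1)] bC[of i] by simp
          qed
          show "\<forall>i. (N *v (\<chi> j. ln (theta eps 0 $ j)))$i > a$i"
          proof
            fix i
            have e1: "(u0 - ln (1/eps) *\<^sub>R m)$i = u0$i - L * m$i" unfolding L_def by simp
            have e2: "a$i = - L * m$i - A * ts$i" unfolding a_def by simp
            show "(N *v (\<chi> j. ln (theta eps 0 $ j)))$i > a$i"
              unfolding Nlnth0[OF e(1)] e1 e2 using A0[of i] by linarith
          qed
          show "\<forall>s\<in>{0..T * L}. \<forall>i. ts$i - exp ((M *v (a + s *\<^sub>R w))$i) > w$i"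
          proof (intro ballI allI)
            fix s i assume s: "s \<in> {0..T * L}"
            have Mv: "M *v (a + s *\<^sub>R w) = (- L) *\<^sub>R k - A *\<^sub>R r + (s / T) *\<^sub>R k"
              unfolding a_def w_def
              by (simp only: matrix_vector_right_distrib matrix_vector_mult_diff_distrib matrix_vector_mult_scaleR Mm Mts scaleR_scaleR) simp
            have "s / T \<le> L" using s Tpos by (simp add: divide_le_eq mult.commute)
            then have "s / T * k$i \<le> L * k$i"
              using k_pos[rule_format, of i] by (intro mult_right_mono) auto
            then have "(M *v (a + s *\<^sub>R w))$i \<le> - A * r$i" unfolding Mv by simp
            then have "exp ((M *v (a + s *\<^sub>R w))$i) \<le> exp (- A * r$i)" by simp
            also have "\<dots> < g i" by (rule expA)
            finally show "ts$i - exp ((M *v (a + s *\<^sub>R w))$i) > w$i" unfolding g_def w_def by simp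
          qed
          show "\<forall>i. a$i + T * L * w$i \<ge> - A * ts$i"
            unfolding a_def w_def using Tpos by simp
          show "T * L \<ge> 0" using Tpos Lpos by simp
          show "eta > 0" by (rule etapos)
        qed
      qed
      define R where "R = (\<bar>c0\<bar> + 2 * \<bar>D\<bar>) / \<delta> + 1"
      show "eventually (\<lambda>eps. dist (hit_time (theta eps) ts eta / ln (1 / eps)) Ts < \<delta>) (at_right 0)"
        unfolding eventually_at_right_field
      proof (intro exI[of _ "min 1 (exp (- R))"] conjI allI impI)
        show "(0::real) < min 1 (exp (- R))" by simp
        fix eps :: real assume e: "0 < eps" "eps < min 1 (exp (- R))"
        define L where "L = ln (1/eps)"
        have "ln eps < - R" using e by (metis exp_gt_zero ln_exp ln_less_cancel_iff min_less_iff_conj)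
        then have LR: "L > R" unfolding L_def using e by (simp add: ln_div)
        have "(\<bar>c0\<bar> + 2 * \<bar>D\<bar>) / \<delta> \<ge> 0" by (rule divide_nonneg_pos) (use dpos in auto)
        then have Rpos: "R > 0" unfolding R_def by linarith
        have Lpos: "L > 0" using LR Rpos by simp
        define S where "S = {t. t \<ge> 0 \<and> norm (theta eps t - ts) \<le> eta}"
        have hit: "hit_time (theta eps) ts eta = Inf S" unfolding hit_time_def S_def ..
        obtain s where s: "s \<in> {T * L..T * L + D}" "norm (theta eps s - ts) \<le> eta"
          using up[of eps] e unfolding L_def by auto
        have "0 \<le> T * L" using Tpos Lpos by simp
        then have "0 \<le> s" using s(1) by simp
        then have sS: "s \<in> S" unfolding S_def using s(2) by simp
        have bdd: "bdd_below S" unfolding S_def by (rule bdd_belowI[of _ 0]) auto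
        have hup: "Inf S \<le> T * L + D" using cInf_lower[OF sS bdd] s(1) by simp
        have hlo: "L * Ts - c0 \<le> Inf S"
        proof (rule cInf_greatest)
          show "S \<noteq> {}" using sS by blast
          fix t assume "t \<in> S"
          then have "t \<ge> 0" "norm (theta eps t - ts) \<le> eta" by (simp_all add: S_def)
          then show "L * Ts - c0 \<le> t" unfolding L_def by (rule low[OF e(1)])
        qed
        have "\<bar>c0\<bar> < \<delta> * L" and "2 * \<bar>D\<bar> < \<delta> * L"
        proof -
          have "\<delta> * R = \<bar>c0\<bar> + 2 * \<bar>D\<bar> + \<delta>" unfolding R_def by (rule aux_R[OF dpos])
          moreover have "\<delta> * R < \<delta> * L" by (rule mult_strict_left_mono[OF LR dpos])
          ultimately show "\<bar>c0\<bar> < \<delta> * L" "2 * \<bar>D\<bar> < \<delta> * L" using dpos by linarith+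
        qed
        then have cD: "\<bar>c0\<bar> < \<delta> * L" "2 * \<bar>D\<bar> < \<delta> * L" by blast+
        have TL: "T * L = L * Ts + (\<delta> * L) / 2" unfolding T_def by (simp add: algebra_simps)
        have "- (\<delta> * L) < Inf S - L * Ts" using hlo cD(1) by linarith
        moreover have "Inf S - L * Ts < \<delta> * L" using hup cD(2) unfolding TL by linarith
        ultimately have "\<bar>Inf S - L * Ts\<bar> < \<delta> * L" unfolding abs_less_iff by linarith
        then have X: "\<bar>(Inf S - L * Ts) / L\<bar> < \<delta>" by (rule aux_absdiv[OF Lpos])
        have Y: "(Inf S - L * Ts) / L = Inf S / L - Ts" by (rule aux_div[OF Lpos])
        show "dist (hit_time (theta eps) ts eta / ln (1 / eps)) Ts < \<delta>"
          unfolding hit L_def[symmetric] dist_real_def using X unfolding Y .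
      qed
    qed
  qed
qed

end
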